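(* Let $P$ be a finite poset and $k\in\mathbb{N}$, and let $\mathcal{A}_k(P)$ be the set of antichains of $P$ of cardinality $k$. For $A,B\in\mathcal{A}_k(P)$ write $A\prec_k B$ if $A\setminus B=\{a\}$ and $B\setminus A=\{b\}$ are singletons with $a<_P b$, and let $\le_k$ be the reflexive transitive closure of $\prec_k$. Also let $\le_J$ be the relation on antichains given by $A\le_J B$ iff for every $a\in A$ there is $b\in B$ with $a\le_P b$. Then: (i) $\le_k$ is a partial order on $\mathcal{A}_k(P)$; (ii) the restriction of $\le_J$ to $\mathcal{A}_k(P)$ refines $\le_k$, i.e. $A\le_k B$ implies $A\le_J B$; (iii) if $A\le_k B$, then the elements of $A$ and $B$ can be labelled $A=\{a_1,\dots,a_k\}$, $B=\{b_1,\dots,b_k\}$ so that $a_i\le_P b_i$ for all $1\le i\le k$; (iv) $B$ covers $A$ in $(\mathcal{A}_k(P),\le_k)$ if and only if $A\prec_k B$ and the unique elements $a\in A\setminus B$ and $b\in B\setminus A$ satisfy $a\lessdot_P b$ (i.e. $b$ covers $a$ in $P$).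
   Context: An antichain is a set of pairwise incomparable elements. The relation $\le_J$ is the order on antichains induced from inclusion of the order ideals they generate. *)

theory Defs
  imports Main
begin

text \<open>The finite poset is a finite set P of elements of a type with a partial
order; the order of the poset is the restriction of that order to P.\<close>

definition is_antichain :: "'a::order set \<Rightarrow> 'a set \<Rightarrow> bool" where
  "is_antichain P A \<longleftrightarrow> A \<subseteq> P \<and> (\<forall>x\<in>A. \<forall>y\<in>A. x \<le> y \<longrightarrow> x = y)"

definition antichains_k :: "'a::order set \<Rightarrow> nat \<Rightarrow> 'a set set" where
  "antichains_k P k = {A. is_antichain P A \<and> card A = k}"

definition prec_k :: "'a::order set \<Rightarrow> nat \<Rightarrow> 'a set \<Rightarrow> 'a set \<Rightarrow> bool" where
  "prec_k P k A B \<longleftrightarrow> A \<in> antichains_k P k \<and> B \<in> antichains_k P k \<and>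
     (\<exists>a b. A - B = {a} \<and> B - A = {b} \<and> a < b)"

definition le_k :: "'a::order set \<Rightarrow> nat \<Rightarrow> 'a set rel" where
  "le_k P k = {(A, B). A \<in> antichains_k P k \<and> B \<in> antichains_k P k \<and> (prec_k P k)\<^sup>*\<^sup>* A B}"

definition le_J :: "'a::order set \<Rightarrow> 'a set \<Rightarrow> bool" where
  "le_J A B \<longleftrightarrow> (\<forall>a\<in>A. \<exists>b\<in>B. a \<le> b)"

definition covers_in :: "'a::order set \<Rightarrow> 'a \<Rightarrow> 'a \<Rightarrow> bool" where
  "covers_in P a b \<longleftrightarrow> a \<in> P \<and> b \<in> P \<and> a < b \<and> \<not> (\<exists>c\<in>P. a < c \<and> c < b)"

definition covers_k :: "'a::order set \<Rightarrow> nat \<Rightarrow> 'a set \<Rightarrow> 'a set \<Rightarrow> bool" where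
  "covers_k P k A B \<longleftrightarrow> (A, B) \<in> le_k P k \<and> A \<noteq> B \<and>
     \<not> (\<exists>C\<in>antichains_k P k. (A, C) \<in> le_k P k \<and> (C, B) \<in> le_k P k \<and> C \<noteq> A \<and> C \<noteq> B)"

end

theory Submission
  imports Defs
begin

lemma prec_split:
  assumes "prec_k P k A B"
  obtains a b where "A - B = {a}" "B - A = {b}" "a < b"
    "A \<in> antichains_k P k" "B \<in> antichains_k P k"
  using assms unfolding prec_k_def by blast

lemma chain_bij:
  "(prec_k P k)\<^sup>*\<^sup>* A B \<Longrightarrow> \<exists>f. bij_betw f A B \<and> (\<forall>x\<in>A. x \<le> f x)"
proof (induction rule: rtranclp_induct)
  case base
  show ?case by (intro exI[of _ id] conjI bij_betw_id) auto
next
  case (step B C)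
  obtain f where f: "bij_betw f A B" "\<forall>x\<in>A. x \<le> f x" using step.IH by blast
  obtain x y where xy: "B - C = {x}" "C - B = {y}" "x < y"
    using step(2) by (rule prec_split)
  define g where "g z = (if z = x then y else z)" for z
  have xB1: "x \<in> B - C" using xy(1) by simp
  have xB2: "y \<in> C - B" using xy(2) by simp
  have xB: "x \<in> B" "y \<notin> B" "y \<in> C" using xB1 xB2 by simp_all
  have C: "C = (B - {x}) \<union> {y}"
  proof
    show "C \<subseteq> (B - {x}) \<union> {y}" using xy(2) xB1 by blast
    show "(B - {x}) \<union> {y} \<subseteq> C" using xy(1) xB2 by blast
  qed
  have "inj_on g B" unfolding inj_on_def g_def using xB by auto
  moreover have "g ` B = C" unfolding C g_def using xB by auto
  ultimately have g: "bij_betw g B C" unfolding bij_betw_def by blast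
  have gle: "z \<le> g z" for z unfolding g_def using xy(3) by (simp add: less_imp_le)
  have "\<forall>x\<in>A. x \<le> (g \<circ> f) x"
  proof
    fix x assume "x \<in> A"
    then have "x \<le> f x" using f(2) by blast
    also have "f x \<le> g (f x)" by (rule gle)
    finally show "x \<le> (g \<circ> f) x" by simp
  qed
  then show ?case using bij_betw_trans[OF f(1) g] by blast
qed

lemma antichain_fix:
  assumes "is_antichain P A" "x \<in> A" "y \<in> A" "x \<le> y"
  shows "x = y"
  using assms unfolding is_antichain_def by blast

lemma le_k_bij:
  "(A, B) \<in> le_k P k \<Longrightarrow> \<exists>f. bij_betw f A B \<and> (\<forall>x\<in>A. x \<le> f x)"
  unfolding le_k_def using chain_bij by blast

theorem proposition2p2:
  fixes P :: "'a::order set" and k :: nat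
  assumes "finite P"
  shows "partial_order_on (antichains_k P k) (le_k P k)
    \<and> (\<forall>A B. (A, B) \<in> le_k P k \<longrightarrow> le_J A B)
    \<and> (\<forall>A B. (A, B) \<in> le_k P k \<longrightarrow>
           (\<exists>a b :: nat \<Rightarrow> 'a. bij_betw a {1..k} A \<and> bij_betw b {1..k} B \<and>
             (\<forall>i\<in>{1..k}. a i \<le> b i)))
    \<and> (\<forall>A\<in>antichains_k P k. \<forall>B\<in>antichains_k P k.
           covers_k P k A B \<longleftrightarrow>
           (prec_k P k A B \<and> covers_in P (the_elem (A - B)) (the_elem (B - A))))"
proof -
  have fin: "finite A" if "A \<in> antichains_k P k" for A
    using that assms finite_subset unfolding antichains_k_def is_antichain_def by blast
  show ?thesis
proof (intro conjI allI impI ballI)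
  show "partial_order_on (antichains_k P k) (le_k P k)"
    unfolding partial_order_on_def preorder_on_def
  proof (intro conjI)
    show "le_k P k \<subseteq> antichains_k P k \<times> antichains_k P k" unfolding le_k_def by auto
    show "refl_on (antichains_k P k) (le_k P k)" unfolding le_k_def refl_on_def by auto
    show "trans (le_k P k)" unfolding le_k_def trans_def by auto
    show "antisym (le_k P k)"
    proof (rule antisymI)
      fix A B assume AB: "(A, B) \<in> le_k P k" and BA: "(B, A) \<in> le_k P k"
      obtain f where f: "bij_betw f A B" "\<forall>x\<in>A. x \<le> f x" using le_k_bij[OF AB] by blast
      obtain g where g: "bij_betw g B A" "\<forall>x\<in>B. x \<le> g x" using le_k_bij[OF BA] by blast
      have acA: "is_antichain P A" using AB unfolding le_k_def antichains_k_def by auto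
      have "f x = x" if "x \<in> A" for x
      proof -
        have fx: "f x \<in> B" using f(1) that bij_betwE by blast
        have gfx: "g (f x) \<in> A" using g(1) fx bij_betwE by blast
        have "x \<le> g (f x)" using f(2) g(2) that fx order_trans by blast
        then have "x = g (f x)" using antichain_fix[OF acA that gfx] by blast
        then show ?thesis using f(2) g(2) that fx by (metis order_antisym)
      qed
      then show "A = B" using f(1) unfolding bij_betw_def by (metis image_cong image_ident)
    qed
  qed
next
  fix A B assume AB: "(A, B) \<in> le_k P k"
  obtain f where f: "bij_betw f A B" "\<forall>x\<in>A. x \<le> f x" using le_k_bij[OF AB] by blast
  show "le_J A B" unfolding le_J_def using f bij_betwE by blast
next
  fix A B assume AB: "(A, B) \<in> le_k P k"
  obtain f where f: "bij_betw f A B" "\<forall>x\<in>A. x \<le> f x" using le_k_bij[OF AB] by blast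
  have Ak: "A \<in> antichains_k P k" using AB unfolding le_k_def by auto
  have "finite A" "card A = k" using fin[OF Ak] Ak unfolding antichains_k_def by auto
  then have "card {1..k} = card A" by simp
  then obtain a where a: "bij_betw a {1..k} A"
    using \<open>finite A\<close> by (metis finite_atLeastAtMost finite_same_card_bij)
  show "\<exists>a b :: nat \<Rightarrow> 'a. bij_betw a {1..k} A \<and> bij_betw b {1..k} B \<and>
             (\<forall>i\<in>{1..k}. a i \<le> b i)"
  proof (intro exI conjI)
    show "bij_betw a {1..k} A" by (rule a)
    show "bij_betw (f \<circ> a) {1..k} B" by (rule bij_betw_trans[OF a f(1)])
    show "\<forall>i\<in>{1..k}. a i \<le> (f \<circ> a) i"
    proof
      fix i assume "i \<in> {1..k}"
      then have "a i \<in> A" using a bij_betwE by blast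
      then show "a i \<le> (f \<circ> a) i" using f(2) by simp
    qed
  qed
next
  fix A B assume Ak: "A \<in> antichains_k P k" and Bk: "B \<in> antichains_k P k"
  show "covers_k P k A B \<longleftrightarrow>
           (prec_k P k A B \<and> covers_in P (the_elem (A - B)) (the_elem (B - A)))"
  proof
    assume cov: "covers_k P k A B"
    then have rt: "(prec_k P k)\<^sup>*\<^sup>* A B" and ne: "A \<noteq> B"
      and nomid: "\<And>C. C \<in> antichains_k P k \<Longrightarrow> (A, C) \<in> le_k P k \<Longrightarrow> (C, B) \<in> le_k P k
          \<Longrightarrow> C = A \<or> C = B"
      unfolding covers_k_def le_k_def by auto
    obtain C where AC: "prec_k P k A C" and CB: "(prec_k P k)\<^sup>*\<^sup>* C B"
      using rt ne by (metis converse_rtranclpE)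
    obtain a c where ac: "A - C = {a}" "C - A = {c}" "a < c" "C \<in> antichains_k P k"
      using AC by (rule prec_split)
    have "C \<noteq> A" using ac by auto
    moreover have "(A, C) \<in> le_k P k" using Ak ac AC unfolding le_k_def by auto
    moreover have "(C, B) \<in> le_k P k" using Bk ac CB unfolding le_k_def by auto
    ultimately have "C = B" using nomid ac by blast
    with AC have prec: "prec_k P k A B" by simp
    obtain a b where ab: "A - B = {a}" "B - A = {b}" "a < b"
      using prec by (rule prec_split)
    have acA: "is_antichain P A" and acB: "is_antichain P B"
      using Ak Bk unfolding antichains_k_def by auto
    have aA: "a \<in> A" "b \<in> B" "a \<notin> B" "b \<notin> A" using ab by auto
    have PAB: "A \<subseteq> P" "B \<subseteq> P" using acA acB unfolding is_antichain_def by auto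
    have "covers_in P a b"
      unfolding covers_in_def
    proof (intro conjI notI)
      show "a \<in> P" "b \<in> P" "a < b" using aA PAB ab by auto
      assume "\<exists>d\<in>P. a < d \<and> d < b"
      then obtain d where d: "d \<in> P" "a < d" "d < b" by blast
      define D where "D = insert d (A - {a})"
      have S: "A - {a} = B - {b}" using ab by blast
      have dS: "d \<notin> A - {a}"
      proof
        assume "d \<in> A - {a}"
        then have "d \<in> A" "d \<noteq> a" by auto
        then show False using antichain_fix[OF acA aA(1) \<open>d \<in> A\<close>] d(2) by (metis less_imp_le)
      qed
      have acD: "is_antichain P D" unfolding is_antichain_def
      proof (intro conjI ballI impI)
        show "D \<subseteq> P" using PAB d unfolding D_def by auto
        fix x y assume x: "x \<in> D" and y: "y \<in> D" and xy: "x \<le> y"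
        have cmp1: False if "z \<in> A - {a}" "z \<le> d" for z
        proof -
          have "z \<in> B" "z \<le> b" using that S d by auto
          then have "z = b" using antichain_fix[OF acB _ aA(2)] by blast
          then show False using that aA by auto
        qed
        have cmp2: False if "z \<in> A - {a}" "d \<le> z" for z
        proof -
          have "z \<in> A" "a \<le> z" using that d by auto
          then have "a = z" using antichain_fix[OF acA aA(1)] by blast
          then show False using that by auto
        qed
        show "x = y"
          using x y xy cmp1 cmp2 antichain_fix[OF acA] unfolding D_def by auto
      qed
      have finA: "finite A" using fin[OF Ak] .
      have cardA: "card A = k" using Ak unfolding antichains_k_def by auto
      have "card D = k" unfolding D_def using finA dS aA cardA
        by (simp add: card_Diff_singleton) (metis One_nat_def Suc_pred card_gt_0_iff empty_iff)
      with acD have Dk: "D \<in> antichains_k P k" unfolding antichains_k_def by auto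
      have "A - D = {a}" "D - A = {d}" unfolding D_def using d aA dS by auto
      then have p1: "prec_k P k A D" unfolding prec_k_def using Ak Dk d by blast
      have "D - B = {d}" "B - D = {b}" unfolding D_def using d aA dS S ab by auto
      then have p2: "prec_k P k D B" unfolding prec_k_def using Bk Dk d by blast
      have "(A, D) \<in> le_k P k" "(D, B) \<in> le_k P k" using p1 p2 Ak Bk Dk unfolding le_k_def by auto
      then have "D = A \<or> D = B" using nomid Dk by blast
      moreover have "D \<noteq> A" using \<open>D - A = {d}\<close> by auto
      moreover have "D \<noteq> B" using \<open>D - B = {d}\<close> by auto
      ultimately show False by blast
    qed
    then show "prec_k P k A B \<and> covers_in P (the_elem (A - B)) (the_elem (B - A))"
      using prec ab by simp
  next
    assume "prec_k P k A B \<and> covers_in P (the_elem (A - B)) (the_elem (B - A))"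
    then have prec: "prec_k P k A B" and cv: "covers_in P (the_elem (A - B)) (the_elem (B - A))"
      by auto
    obtain a b where ab: "A - B = {a}" "B - A = {b}" "a < b"
      using prec by (rule prec_split)
    have cab: "\<And>c. c \<in> P \<Longrightarrow> a \<le> c \<Longrightarrow> c \<le> b \<Longrightarrow> c = a \<or> c = b"
      using cv ab unfolding covers_in_def by (auto simp: order.order_iff_strict)
    have acA: "is_antichain P A" and acB: "is_antichain P B"
      using Ak Bk unfolding antichains_k_def by auto
    have AB: "(A, B) \<in> le_k P k" using prec Ak Bk unfolding le_k_def by auto
    have ne: "A \<noteq> B" using ab by auto
    have aA: "a \<in> A" "b \<in> B" "a \<notin> B" "b \<notin> A" using ab by auto
    have S: "A - {a} = B - {b}" using ab by blast
    have "\<not> (\<exists>C\<in>antichains_k P k. (A, C) \<in> le_k P k \<and> (C, B) \<in> le_k P k \<and> C \<noteq> A \<and> C \<noteq> B)"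
    proof
      assume "\<exists>C\<in>antichains_k P k. (A, C) \<in> le_k P k \<and> (C, B) \<in> le_k P k \<and> C \<noteq> A \<and> C \<noteq> B"
      then obtain C where Ck: "C \<in> antichains_k P k" and AC: "(A, C) \<in> le_k P k"
        and CB: "(C, B) \<in> le_k P k" and CA: "C \<noteq> A" "C \<noteq> B" by blast
      obtain f where f: "bij_betw f A C" "\<forall>x\<in>A. x \<le> f x" using le_k_bij[OF AC] by blast
      obtain g where g: "bij_betw g C B" "\<forall>x\<in>C. x \<le> g x" using le_k_bij[OF CB] by blast
      have PC: "C \<subseteq> P" using Ck unfolding antichains_k_def is_antichain_def by auto
      have fix1: "f x = x \<and> g x = x" if "x \<in> A - {a}" for x
      proof -
        have xB: "x \<in> B" "x \<in> A" using that S by auto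
        have fx: "f x \<in> C" using f(1) xB bij_betwE by blast
        have gfx: "g (f x) \<in> B" using g(1) fx bij_betwE by blast
        have "x \<le> g (f x)" using f(2) g(2) xB fx order_trans by blast
        then have "x = g (f x)" using antichain_fix[OF acB xB(1) gfx] by blast
        then have "f x = x" using f(2) g(2) xB fx by (metis order_antisym)
        then show ?thesis using \<open>x = g (f x)\<close> by simp
      qed
      have Cim: "C = f ` A" using f(1) unfolding bij_betw_def by auto
      have Aeq: "A = insert a (A - {a})" using aA by auto
      have C2: "C = insert (f a) (A - {a})"
      proof -
        have "C = insert (f a) (f ` (A - {a}))" using Cim Aeq by (metis image_insert)
        also have "f ` (A - {a}) = A - {a}" using fix1 by (auto simp: image_iff)
        finally show ?thesis .
      qed
      have fa: "f a \<in> C" using C2 by auto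
      have gfa: "g (f a) = b"
      proof -
        have "g (f a) \<in> B" using g(1) fa bij_betwE by blast
        moreover have "g (f a) \<notin> B - {b}"
        proof
          assume "g (f a) \<in> B - {b}"
          then have z: "g (f a) \<in> A - {a}" using S by simp
          then have "g (g (f a)) = g (f a)" using fix1 by blast
          have "g (f a) \<in> C" using z C2 by auto
          moreover have "g (f a) \<noteq> f a"
          proof
            assume "g (f a) = f a"
            then have "f a \<in> A - {a}" using z by simp
            then have "f (f a) = f a" using fix1 by blast
            moreover have "f a \<noteq> a" using \<open>f a \<in> A - {a}\<close> by auto
            ultimately show False using f(1) aA \<open>f a \<in> A - {a}\<close>
              unfolding bij_betw_def inj_on_def by blast
          qed
          ultimately show False using g(1) fa \<open>g (g (f a)) = g (f a)\<close>
            unfolding bij_betw_def inj_on_def by metis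
        qed
        ultimately show ?thesis by blast
      qed
      have "a \<le> f a" "f a \<le> b" using f(2) g(2) aA fa gfa by auto
      then have "f a = a \<or> f a = b" using cab PC fa by blast
      moreover have "insert a (A - {a}) = A" using aA by auto
      moreover have "insert b (A - {a}) = B" using S aA by auto
      ultimately show False using C2 CA by metis
    qed
    then show "covers_k P k A B" unfolding covers_k_def using AB ne by blast
  qed
qed
qed

end
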